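(* Let $n$ be a positive integer, $g=3n+2$, and let $G=\{\ell_1<\dots<\ell_g\}$ be a pure $(2n+1)$-sparse gapset of genus $g$ with multiplicity $m$ and depth $q\le 3$. Let $\alpha=\max\{i:\ell_{i+1}-\ell_i=2n+1\}$. Then $\ell_\alpha\le 2m-1$.
   Context: A gapset is a finite set $G\subset\mathbb{N}=\{1,2,\dots\}$ such that whenever $z\in G$ and $z=x+y$ with $x,y\in\mathbb{N}$, then $x\in G$ or $y\in G$; its genus is $g=\#G$ (a nonempty gapset of genus $g$ is contained in $[1,2g-1]$). Multiplicity $m(G)=\min\{s\in\mathbb{N}:s\notin G\}$; conductor $c(G)=\min\{s\in\mathbb{N}: s+t\notin G\ \forall t\in\mathbb{N}_0\}$; depth $q(G)=\lceil c(G)/m(G)\rceil$. $G$ is pure $\kappa$-sparse if $\ell_{i+1}-\ell_i\le\kappa$ for all $i$ with equality for some $i$. *)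

theory Defs
  imports Complex_Main
begin

definition gapset :: "nat set \<Rightarrow> bool" where
  "gapset G \<longleftrightarrow> finite G \<and> 0 \<notin> G \<and>
     (\<forall>z\<in>G. \<forall>x y. 1 \<le> x \<and> 1 \<le> y \<and> z = x + y \<longrightarrow> x \<in> G \<or> y \<in> G)"

definition genus :: "nat set \<Rightarrow> nat" where
  "genus G = card G"

definition multiplicity :: "nat set \<Rightarrow> nat" where
  "multiplicity G = (LEAST s. 1 \<le> s \<and> s \<notin> G)"

definition conductor :: "nat set \<Rightarrow> nat" where
  "conductor G = (LEAST s. 1 \<le> s \<and> (\<forall>t. s + t \<notin> G))"

definition depth :: "nat set \<Rightarrow> nat" where
  "depth G = nat \<lceil>real (conductor G) / real (multiplicity G)\<rceil>"

text \<open>The i-th smallest element (1-indexed): G = {elt G 1 < ... < elt G g}.\<close>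
definition elt :: "nat set \<Rightarrow> nat \<Rightarrow> nat" where
  "elt G i = sorted_list_of_set G ! (i - 1)"

definition pure_sparse :: "nat \<Rightarrow> nat set \<Rightarrow> bool" where
  "pure_sparse \<kappa> G \<longleftrightarrow>
     (\<forall>i. 1 \<le> i \<and> i < card G \<longrightarrow> elt G (i + 1) - elt G i \<le> \<kappa>) \<and>
     (\<exists>i. 1 \<le> i \<and> i < card G \<and> elt G (i + 1) - elt G i = \<kappa>)"

end

theory Submission
  imports Defs
begin

lemma elt_in:
  assumes "finite G" "1 \<le> i" "i \<le> card G"
  shows "elt G i \<in> G"
proof -
  have "i - 1 < length (sorted_list_of_set G)" using assms by simp
  hence "sorted_list_of_set G ! (i - 1) \<in> set (sorted_list_of_set G)" by (rule nth_mem)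
  thus ?thesis using assms(1) by (simp add: elt_def)
qed

theorem mainTheorem17:
  fixes n :: nat and G :: "nat set"
  assumes "0 < n"
    and "gapset G"
    and "genus G = 3 * n + 2"
    and "pure_sparse (2 * n + 1) G"
    and "depth G \<le> 3"
  shows "elt G (Max {i. 1 \<le> i \<and> i < genus G \<and> elt G (i + 1) - elt G i = 2 * n + 1})
           \<le> 2 * multiplicity G - 1"
proof (rule ccontr)
  define A where "A = {i. 1 \<le> i \<and> i < genus G \<and> elt G (i + 1) - elt G i = 2 * n + 1}"
  define a where "a = Max A"
  define x where "x = elt G a"
  define y where "y = elt G (a + 1)"
  define m where "m = multiplicity G"
  define c where "c = conductor G"
  assume H: "\<not> elt G (Max {i. 1 \<le> i \<and> i < genus G \<and> elt G (i + 1) - elt G i = 2 * n + 1})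
           \<le> 2 * multiplicity G - 1"
  hence xgt: "x > 2 * m - 1" unfolding x_def a_def A_def m_def by simp
  have fin: "finite G" and g0: "0 \<notin> G"
    and gp: "\<And>z u v. z \<in> G \<Longrightarrow> 1 \<le> u \<Longrightarrow> 1 \<le> v \<Longrightarrow> z = u + v \<Longrightarrow> u \<in> G \<or> v \<in> G"
    using assms(2) unfolding gapset_def by blast+
  have Ane: "A \<noteq> {}" using assms(4) unfolding pure_sparse_def A_def genus_def by blast
  have Afin: "finite A" unfolding A_def by auto
  have "a \<in> A" unfolding a_def using Ane Afin by simp
  hence a1: "1 \<le> a" and ag: "a < card G" and ad: "y - x = 2 * n + 1"
    unfolding A_def x_def y_def genus_def by auto
  have xG: "x \<in> G" unfolding x_def using elt_in[OF fin a1] ag by simp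
  have yG: "y \<in> G" unfolding y_def using elt_in[OF fin, of "a+1"] ag by simp
  have yx: "y = x + 2 * n + 1" using ad by simp
  have exs: "\<exists>s. 1 \<le> s \<and> s \<notin> G"
  proof -
    have "Suc (Max (insert 0 G)) \<notin> G"
      using Max_ge[of "insert 0 G"] fin by (metis finite_insert insertCI not_less_eq_eq le_refl)
    thus ?thesis by (intro exI[of _ "Suc (Max (insert 0 G))"]) simp
  qed
  have m1: "1 \<le> m" and mG: "m \<notin> G" unfolding m_def multiplicity_def
    using LeastI_ex[OF exs] by auto
  have below: "\<And>s. 1 \<le> s \<Longrightarrow> s < m \<Longrightarrow> s \<in> G"
    unfolding m_def multiplicity_def using not_less_Least by blast
  have exc: "\<exists>s. 1 \<le> s \<and> (\<forall>t. s + t \<notin> G)"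
  proof -
    have "\<forall>t. Suc (Max G) + t \<notin> G"
      using Max_ge[OF fin] by (metis add_Suc not_less_eq_eq le_add1)
    thus ?thesis by (intro exI[of _ "Suc (Max G)"]) simp
  qed
  have cprop: "\<forall>t. c + t \<notin> G" unfolding c_def conductor_def using LeastI_ex[OF exc] by auto
  have yc: "y < c"
  proof (rule ccontr)
    assume "\<not> y < c"
    then have "y = c + (y - c)" by simp
    thus False using cprop yG by metis
  qed
  have "real c / real m \<le> 3"
  proof -
    have "nat \<lceil>real c / real m\<rceil> \<le> 3" using assms(5) unfolding depth_def c_def m_def by simp
    hence "\<lceil>real c / real m\<rceil> \<le> 3" by linarith
    thus ?thesis by linarith
  qed
  hence "real c \<le> 3 * real m" using m1 by (simp add: divide_le_eq)
  hence c3: "c \<le> 3 * m" by linarith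
  have m2: "2 * m \<notin> G" using gp[of "2*m" m m] mG m1 by (auto simp: mult_2)
  have x2: "x \<ge> 2 * m + 1"
  proof -
    have "x \<noteq> 2 * m" using xG m2 by auto
    thus ?thesis using xgt by linarith
  qed
  have ym: "y - m \<in> G" using gp[of y m "y - m"] yG mG m1 yx x2 by auto
  define I where "I = {m<..<y-m}"
  define S where "S = G \<inter> I"
  have IS: "I \<subseteq> S \<union> (\<lambda>b. y - b) ` S"
  proof
    fix b assume b: "b \<in> I"
    show "b \<in> S \<union> (\<lambda>b. y - b) ` S"
    proof (cases "b \<in> G")
      case True thus ?thesis using b S_def by auto
    next
      case False
      have "y - b \<in> G" using gp[of y b "y - b"] yG False b unfolding I_def by auto
      moreover have "y - b \<in> I" using b unfolding I_def by auto
      moreover have "b = y - (y - b)" using b unfolding I_def by auto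
      ultimately show ?thesis unfolding S_def by blast
    qed
  qed
  have "card I \<le> card (S \<union> (\<lambda>b. y - b) ` S)"
    by (rule card_mono[OF _ IS]) (auto simp: S_def I_def)
  also have "\<dots> \<le> card S + card ((\<lambda>b. y - b) ` S)" by (rule card_Un_le)
  also have "\<dots> \<le> 2 * card S" using card_image_le[of S "\<lambda>b. y - b"] by (auto simp: S_def I_def)
  finally have cI: "card I \<le> 2 * card S" .
  have "card I = y - m - 1 - m" unfolding I_def by simp
  hence cS: "card S \<ge> n + 1" using cI yx x2 by linarith
  have sub: "{1..<m} \<union> S \<union> {y - m, x, y} \<subseteq> G" using below ym xG yG by (auto simp: S_def)
  have "card ({1..<m} \<union> S \<union> {y - m, x, y}) \<le> card G" by (rule card_mono[OF fin sub])
  moreover have "card ({1..<m} \<union> S \<union> {y - m, x, y}) = (m - 1) + card S + 3"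
  proof -
    have d1: "{1..<m} \<inter> S = {}" by (auto simp: S_def I_def)
    have d2: "({1..<m} \<union> S) \<inter> {y - m, x, y} = {}" using yx x2 yc c3
      by (auto simp: S_def I_def)
    have fS: "finite S" using fin by (simp add: S_def)
    have "y - m < x" "x < y" using yx x2 yc c3 by linarith+
    hence c3': "card {y - m, x, y} = 3" by auto
    have "card ({1..<m} \<union> S \<union> {y - m, x, y}) = card ({1..<m} \<union> S) + card {y - m, x, y}"
      by (rule card_Un_disjoint) (use fS d2 in auto)
    moreover have "card ({1..<m} \<union> S) = card {1..<m} + card S"
      by (rule card_Un_disjoint) (use fS d1 in auto)
    ultimately show ?thesis using c3' by simp
  qed
  ultimately show False using assms(3) cS yx x2 yc c3 unfolding genus_def by linarith
qed

end
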